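(* Let $n\geq 1$ and $s\geq 1$ be integers. Let $G$ be a connected graph on $n+s$ vertices and let $S\subseteq V(G)$ with $|S|=s$. If every non-terminal level with respect to $S$ contains at least $3$ vertices, then \[ \sigma(S)\leq \frac{1}{6}\left(n^2+3n+2\right). \]
   Context: For a connected graph $G$ and $\emptyset\neq S\subseteq V(G)$, $d_G(S,u)=\min\{d_G(u,v): v\in S\}$, and the status of $S$ is $\sigma(S)=\sigma_G(S)=\sum_{u\in V(G)} d_G(S,u)$. For $i\geq 1$, the $i$-th level with respect to $S$ is the set of vertices $u$ with $d_G(S,u)=i$. The terminal level is the nonempty level with the largest index $i$; the non-terminal levels are all levels $1,\dots,r$ preceding the terminal level $r+1$ (all of which are nonempty by connectivity). *)

theory Defs
  imports Complex_Main
begin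

definition simple_graph :: "'a set \<Rightarrow> ('a \<Rightarrow> 'a \<Rightarrow> bool) \<Rightarrow> bool" where
  "simple_graph V E \<longleftrightarrow> finite V \<and>
     (\<forall>u v. E u v \<longrightarrow> u \<in> V \<and> v \<in> V \<and> u \<noteq> v \<and> E v u)"

definition is_walk :: "'a set \<Rightarrow> ('a \<Rightarrow> 'a \<Rightarrow> bool) \<Rightarrow> 'a list \<Rightarrow> bool" where
  "is_walk V E xs \<longleftrightarrow> xs \<noteq> [] \<and> set xs \<subseteq> V \<and>
     (\<forall>i. Suc i < length xs \<longrightarrow> E (xs ! i) (xs ! Suc i))"

definition connected_graph :: "'a set \<Rightarrow> ('a \<Rightarrow> 'a \<Rightarrow> bool) \<Rightarrow> bool" where
  "connected_graph V E \<longleftrightarrow> V \<noteq> {} \<and>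
     (\<forall>u\<in>V. \<forall>v\<in>V. \<exists>xs. is_walk V E xs \<and> hd xs = u \<and> last xs = v)"

definition gdist :: "'a set \<Rightarrow> ('a \<Rightarrow> 'a \<Rightarrow> bool) \<Rightarrow> 'a \<Rightarrow> 'a \<Rightarrow> nat" where
  "gdist V E u v = (LEAST k. \<exists>xs. is_walk V E xs \<and> hd xs = u \<and> last xs = v \<and> length xs = Suc k)"

definition set_dist :: "'a set \<Rightarrow> ('a \<Rightarrow> 'a \<Rightarrow> bool) \<Rightarrow> 'a set \<Rightarrow> 'a \<Rightarrow> nat" where
  "set_dist V E S u = Min ((\<lambda>v. gdist V E u v) ` S)"

definition status :: "'a set \<Rightarrow> ('a \<Rightarrow> 'a \<Rightarrow> bool) \<Rightarrow> 'a set \<Rightarrow> nat" where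
  "status V E S = (\<Sum>u\<in>V. set_dist V E S u)"

definition level :: "'a set \<Rightarrow> ('a \<Rightarrow> 'a \<Rightarrow> bool) \<Rightarrow> 'a set \<Rightarrow> nat \<Rightarrow> 'a set" where
  "level V E S i = {u \<in> V. set_dist V E S u = i}"

definition terminal_index :: "'a set \<Rightarrow> ('a \<Rightarrow> 'a \<Rightarrow> bool) \<Rightarrow> 'a set \<Rightarrow> nat" where
  "terminal_index V E S = Max (set_dist V E S ` V)"

end

theory Submission
  imports Defs
begin

lemma int_prod_nonneg: "(x::int) * (x + 1) \<ge> 0"
proof (cases "x \<ge> 0")
  case True then show ?thesis by simp
next
  case False then have "x \<le> -1" by simp
  then show ?thesis by (simp add: mult_nonpos_nonpos)
qed

lemma tri_sum: "2 * (\<Sum>i\<in>{1..<R}. R - i) = R * (R - 1::nat)"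
proof (induction R)
  case 0 then show ?case by simp
next
  case (Suc R)
  have "(\<Sum>i\<in>{1..<Suc R}. Suc R - i) = (\<Sum>i\<in>{1..<R}. Suc R - i) + (if R \<ge> 1 then 1 else 0)"
    by (cases R) (auto simp: atLeastLessThanSuc)
  also have "(\<Sum>i\<in>{1..<R}. Suc R - i) = (\<Sum>i\<in>{1..<R}. R - i) + (R - 1)"
  proof -
    have "(\<Sum>i\<in>{1..<R}. Suc R - i) = (\<Sum>i\<in>{1..<R}. (R - i) + 1)"
      by (rule sum.cong) auto
    also have "\<dots> = (\<Sum>i\<in>{1..<R}. R - i) + (\<Sum>i\<in>{1..<R}. (1::nat))"
      by (simp only: sum.distrib)
    finally show ?thesis by simp
  qed
  finally show ?case using Suc.IH by (cases R) (auto simp: algebra_simps)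
qed

theorem lemma8:
  fixes V :: "'a set" and E :: "'a \<Rightarrow> 'a \<Rightarrow> bool" and S :: "'a set" and n s :: nat
  assumes "n \<ge> 1" and "s \<ge> 1"
    and "simple_graph V E" and "connected_graph V E"
    and "card V = n + s"
    and "S \<subseteq> V" and "card S = s"
    and "\<forall>i. 1 \<le> i \<and> i < terminal_index V E S \<longrightarrow> card (level V E S i) \<ge> 3"
  shows "real (status V E S) \<le> (real n ^ 2 + 3 * real n + 2) / 6"
proof -
  define d where "d = set_dist V E S"
  define R where "R = terminal_index V E S"
  define W where "W = V - S"
  define L where "L = level V E S"
  have finV: "finite V" using assms(3) by (simp add: simple_graph_def)
  have finS: "finite S" using finV assms(6) finite_subset by blast
  have finW: "finite W" using finV W_def by simp
  have cardW: "card W = n" using assms(5,6,7) finS unfolding W_def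
    by (simp add: card_Diff_subset)
  have g0: "gdist V E u u = 0" if "u \<in> V" for u
  proof -
    have "is_walk V E [u]" using that by (simp add: is_walk_def)
    then show ?thesis unfolding gdist_def
      by (intro Least_eq_0) (rule exI[of _ "[u]"], simp)
  qed
  have d0: "d u = 0" if "u \<in> S" for u
  proof -
    have "0 \<in> (\<lambda>v. gdist V E u v) ` S" using that g0 assms(6) by force
    then have "Min ((\<lambda>v. gdist V E u v) ` S) \<le> 0" using finS by (intro Min_le) auto
    then show ?thesis by (simp add: d_def set_dist_def)
  qed
  have dR: "d u \<le> R" if "u \<in> V" for u
    unfolding d_def R_def terminal_index_def using finV that by (intro Max_ge) auto
  have stat: "status V E S = (\<Sum>u\<in>W. d u)"
  proof -
    have "status V E S = (\<Sum>u\<in>V. d u)" by (simp add: status_def d_def)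
    also have "\<dots> = (\<Sum>u\<in>W. d u) + (\<Sum>u\<in>S. d u)"
      unfolding W_def using finV assms(6) by (metis sum.subset_diff)
    also have "(\<Sum>u\<in>S. d u) = 0" using d0 by simp
    finally show ?thesis by simp
  qed
  have AB: "(\<Sum>u\<in>W. d u) + (\<Sum>u\<in>W. R - d u) = R * n"
  proof -
    have "(\<Sum>u\<in>W. d u) + (\<Sum>u\<in>W. R - d u) = (\<Sum>u\<in>W. d u + (R - d u))"
      by (simp add: sum.distrib)
    also have "\<dots> = (\<Sum>u\<in>W. R)" using dR W_def by (intro sum.cong) auto
    finally show ?thesis using cardW by simp
  qed
  have Lsub: "L i \<subseteq> W" if "1 \<le> i" for i
    using that d0 unfolding L_def level_def W_def d_def by force
  have finL: "finite (L i)" for i unfolding L_def level_def using finV by simp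
  have B: "(\<Sum>u\<in>W. R - d u) \<ge> 3 * (\<Sum>i\<in>{1..<R}. R - i)"
  proof -
    have "3 * (\<Sum>i\<in>{1..<R}. R - i) = (\<Sum>i\<in>{1..<R}. 3 * (R - i))"
      by (simp add: sum_distrib_left)
    also have "\<dots> \<le> (\<Sum>i\<in>{1..<R}. (R - i) * card (L i))"
      using assms(8) unfolding R_def L_def by (intro sum_mono) (simp add: mult.commute)
    also have "\<dots> = (\<Sum>i\<in>{1..<R}. (\<Sum>u\<in>L i. R - d u))"
      by (intro sum.cong refl) (auto simp: L_def level_def d_def)
    also have "\<dots> = (\<Sum>u\<in>(\<Union>i\<in>{1..<R}. L i). R - d u)"
      using finL by (intro sum.UNION_disjoint[symmetric]) (auto simp: L_def level_def)
    also have "\<dots> \<le> (\<Sum>u\<in>W. R - d u)"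
      using Lsub finW by (intro sum_mono2) force+
    finally show ?thesis .
  qed
  define A where "A = (\<Sum>u\<in>W. d u)"
  define C where "C = (\<Sum>i\<in>{1..<R}. R - i)"
  have C2: "2 * C = R * (R - 1)" unfolding C_def by (rule tri_sum)
  have iA: "int A + 3 * int C \<le> int R * int n" using AB B unfolding A_def C_def
    by (metis add_left_mono of_nat_add of_nat_le_iff of_nat_mult of_nat_numeral)
  have iC: "2 * int C = int R * int R - int R"
  proof (cases R)
    case (Suc m)
    then have "int (2 * C) = int (m + m * m)" using C2 by (simp add: algebra_simps)
    then show ?thesis using Suc by (simp add: algebra_simps)
  qed (use C2 in simp)
  have P: "(int n - 3 * int R + 1) * (int n - 3 * int R + 1 + 1) \<ge> 0" by (rule int_prod_nonneg)
  have "6 * int A \<le> int n * int n + 3 * int n + 2"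
    using iA iC P by (simp add: algebra_simps)
  then have "6 * real A \<le> real n * real n + 3 * real n + 2"
    by (metis (mono_tags) of_int_le_iff of_int_of_nat_eq of_int_add of_int_mult of_int_numeral)
  then show ?thesis using stat A_def by (simp add: power2_eq_square)
qed

end
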